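(* Consider an execution of the PermitBFT protocol during a phase of synchronous operation. If round $i$ is unified and its creator $u=v_{i\bmod n}$ is honest, then $u$ creates a block or issues a proposal in round $i$.
   Context: PermitBFT protocol. There are $n$ nodes $v_0,\dots,v_{n-1}$; exactly $f<n/3$ are byzantine, the remaining $n-f$ are honest and follow the protocol. A position is a finite set of blocks. A permit is a signed tuple $(r,p)$. A proof for $(r,p)$ is a set of $2f+1$ permits for $(r,p)$ from distinct nodes. A block of round $r$ is signed by the creator $v_{r\bmod n}$ and contains a proof for $(r,p)$. A proposal of round $r$ is a position together with at least $2f+1$ round-$r$ permits from distinct nodes. Honest node: round $:=0$, current $:=\{\text{genesis}\}$; each round with $c=\text{round}\bmod n$: (1) send permit (round, current) to $v_c$; (2) if it is $v_c$: start the creator timeout; once $2f+1$ permits of this round for one position $p$ are held, broadcast a block with this proof at $p$ and stop; if the creator timeout expires first, broadcast a proposal if at least $2f+1$ permits of this round are held, and stop; also stop upon receiving a block, proposal or $2f+1$ timeout messages of a later round; (3) repeat: upon receiving a block or proposal of a round $r'\ge$ round, set round $:=r'$ and current accordingly and go to (4); when the round timeout expires, broadcast timeout(round); if holding $2f+1$ timeout messages for some round $\ge$ round, jump to the largest such round, forward them, go to (4); (4) round $:=$ round$+1$. Synchronous operation: every message between honest nodes is delivered within a known bound $\Delta$, local timers are reliable, local computation takes no time, and $2\Delta<\text{creator timeout}<3\Delta$, $5\Delta<\text{round timeout}$. Let $r_{\max}(t)$ be the maximum round-variable value over honest nodes at time $t$; round $i$ starts at $T_i=\min\{t: r_{\max}(t)\ge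 i\}$; round $i$ is unified if all honest nodes start executing round $i$ within $[T_i,T_i+\Delta]$. *)

theory Defs
  imports Complex_Main "HOL-Library.FSet"
begin

text \<open>Nodes are the natural numbers 0..N-1 (node v_j is j); rounds are natural numbers;
  time is real.  The model is a small-step semantics of the whole system: honest nodes follow
  the protocol, byzantine nodes may send any message whose honest signatures they have seen,
  and the network/timers obey the synchrony assumptions from time GST on.\<close>

record cfg =
  N   :: nat
  F   :: nat
  Hon :: "nat set"
  D   :: real
  CT  :: real
  RT  :: real
  GST :: real

definition wf_cfg :: "cfg \<Rightarrow> bool" where
  "wf_cfg c \<longleftrightarrow> 3 * F c < N c \<and> Hon c \<subseteq> {..<N c} \<and> card (Hon c) = N c - F c
     \<and> 0 < D c \<and> 2 * D c < CT c \<and> CT c < 3 * D c \<and> 5 * D c < RT c"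

text \<open>Blocks: the genesis block, or a block of round r at position p carrying a proof for (r,p),
  represented by the set of (distinct) signers of its permits for (r,p).  The block of round r is
  signed by its creator v_(r mod n).\<close>

datatype blk = Genesis | Blk nat "blk fset" "nat fset"

type_synonym pos = "blk fset"

datatype msg =
    Permit nat nat pos                       \<comment> \<open>signer, round, position\<close>
  | BlockM blk
  | Proposal nat pos "(nat \<times> pos) fset"     \<comment> \<open>round r, position, round-r permits (signer, position)\<close>
  | TimeoutM nat nat                         \<comment> \<open>signer, round\<close>
  | TimeoutCert nat "nat fset"               \<comment> \<open>forwarded timeout messages of a round: round, signers\<close>

text \<open>Signatures contained in a message (used for unforgeability).\<close>
datatype sig = SPermit nat nat pos | SBlock blk | STimeout nat nat

fun blk_round :: "blk \<Rightarrow> nat" where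
  "blk_round Genesis = 0"
| "blk_round (Blk r p S) = r"

fun signer :: "cfg \<Rightarrow> sig \<Rightarrow> nat" where
  "signer c (SPermit j r p) = j"
| "signer c (SBlock b) = blk_round b mod N c"
| "signer c (STimeout j r) = j"

fun sigs :: "msg \<Rightarrow> sig set" where
  "sigs (Permit j r p) = {SPermit j r p}"
| "sigs (BlockM Genesis) = {SBlock Genesis}"
| "sigs (BlockM (Blk r p S)) = insert (SBlock (Blk r p S)) {SPermit j r p | j. j |\<in>| S}"
| "sigs (Proposal r q P) = {SPermit j r p | j p. (j, p) |\<in>| P}"
| "sigs (TimeoutM j r) = {STimeout j r}"
| "sigs (TimeoutCert r S) = {STimeout j r | j. j |\<in>| S}"

fun valid_msg :: "cfg \<Rightarrow> msg \<Rightarrow> bool" where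
  "valid_msg c (BlockM (Blk r p S)) \<longleftrightarrow> fcard S = 2 * F c + 1 \<and> fset S \<subseteq> {..<N c}"
| "valid_msg c (BlockM Genesis) \<longleftrightarrow> False"
| "valid_msg c (Proposal r q P) \<longleftrightarrow> fcard (fst |`| P) = fcard P \<and> 2 * F c + 1 \<le> fcard P
      \<and> fset (fst |`| P) \<subseteq> {..<N c}"
| "valid_msg c (TimeoutCert r S) \<longleftrightarrow> 2 * F c + 1 \<le> fcard S \<and> fset S \<subseteq> {..<N c}"
| "valid_msg c (Permit j r p) \<longleftrightarrow> j < N c"
| "valid_msg c (TimeoutM j r) \<longleftrightarrow> j < N c"

text \<open>Phase \<open>Cre d\<close>: step (2) (creator), creator timeout
  expiring at time d.  Phase \<open>Wt d b\<close>: step (3), round timeout expiring at d, b = timeout message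
  already broadcast.  The inbox holds all messages received so far.\<close>

datatype phase = Cre real | Wt real bool

record lst =
  rnd   :: nat
  cur   :: pos
  ph    :: phase
  inbox :: "msg set"

definition bcast :: "cfg \<Rightarrow> msg \<Rightarrow> (nat \<times> msg) set" where
  "bcast c m = {(j, m) | j. j < N c}"

text \<open>Entering round r with current position p at time t: step (1) sends the permit (r,p) to the
  creator v_(r mod n); the creator then runs step (2), every other node step (3).\<close>
definition enter :: "cfg \<Rightarrow> real \<Rightarrow> nat \<Rightarrow> lst \<Rightarrow> nat \<Rightarrow> pos \<Rightarrow> lst \<times> (nat \<times> msg) set" where
  "enter c t v s r p =
     (s\<lparr>rnd := r, cur := p,
        ph := (if v = r mod N c then Cre (t + CT c) else Wt (t + RT c) False)\<rparr>,
      {(r mod N c, Permit v r p)})"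

definition permits_for :: "cfg \<Rightarrow> msg set \<Rightarrow> nat \<Rightarrow> pos \<Rightarrow> nat set" where
  "permits_for c I r p = {j. j < N c \<and> Permit j r p \<in> I}"

definition permit_pairs :: "cfg \<Rightarrow> msg set \<Rightarrow> nat \<Rightarrow> (nat \<times> pos) set" where
  "permit_pairs c I r = {(j, p). j < N c \<and> Permit j r p \<in> I}"

definition tsigners :: "cfg \<Rightarrow> msg set \<Rightarrow> nat \<Rightarrow> nat set" where
  "tsigners c I r = {j. j < N c \<and> (TimeoutM j r \<in> I \<or>
      (\<exists>S. TimeoutCert r S \<in> I \<and> valid_msg c (TimeoutCert r S) \<and> j |\<in>| S))}"

definition later_evidence :: "cfg \<Rightarrow> msg set \<Rightarrow> nat \<Rightarrow> bool" where
  "later_evidence c I r \<longleftrightarrow>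
     (\<exists>b. BlockM b \<in> I \<and> valid_msg c (BlockM b) \<and> r < blk_round b)
   \<or> (\<exists>r' q P. Proposal r' q P \<in> I \<and> valid_msg c (Proposal r' q P) \<and> r < r')
   \<or> (\<exists>r'. r < r' \<and> 2 * F c + 1 \<le> card (tsigners c I r'))"

text \<open>One local action of honest node v at time t, from local state s to s', sending \<open>out\<close>
  (a set of (receiver, message) pairs).  These are all the protocol steps (2)--(4).\<close>
definition lact :: "cfg \<Rightarrow> real \<Rightarrow> nat \<Rightarrow> lst \<Rightarrow> lst \<Rightarrow> (nat \<times> msg) set \<Rightarrow> bool" where
  "lact c t v s s' out \<longleftrightarrow>
    (case ph s of
      Cre d \<Rightarrow>
        \<comment> \<open>(2) 2f+1 permits of this round for one position p: broadcast a block and stop\<close>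
        (\<exists>p S. fset S \<subseteq> permits_for c (inbox s) (rnd s) p \<and> fcard S = 2 * F c + 1
            \<and> s' = s\<lparr>ph := Wt (t + RT c) False\<rparr> \<and> out = bcast c (BlockM (Blk (rnd s) p S)))
        \<comment> \<open>(2) creator timeout expires: broadcast a proposal if 2f+1 permits are held, and stop\<close>
      \<or> (d \<le> t \<and> s' = s\<lparr>ph := Wt (t + RT c) False\<rparr> \<and>
          (if 2 * F c + 1 \<le> card (fst ` permit_pairs c (inbox s) (rnd s))
           then (\<exists>q P. fset P \<subseteq> permit_pairs c (inbox s) (rnd s) \<and> fcard (fst |`| P) = fcard P
                   \<and> 2 * F c + 1 \<le> fcard P \<and> out = bcast c (Proposal (rnd s) q P))
           else out = {}))
        \<comment> \<open>(2) stop upon a block, proposal or 2f+1 timeout messages of a later round\<close>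
      \<or> (later_evidence c (inbox s) (rnd s) \<and> s' = s\<lparr>ph := Wt (t + RT c) False\<rparr> \<and> out = {})
    | Wt d b \<Rightarrow>
        \<comment> \<open>(3) block of a round r' \<ge> round: round := r', current := its position plus the block, (4)\<close>
        (\<exists>bk. BlockM bk \<in> inbox s \<and> valid_msg c (BlockM bk) \<and> rnd s \<le> blk_round bk
            \<and> (case bk of Blk r p S \<Rightarrow> (s', out) = enter c t v s (Suc r) (finsert bk p)
                         | Genesis \<Rightarrow> False))
        \<comment> \<open>(3) proposal of a round r' \<ge> round: round := r', current := its position, (4)\<close>
      \<or> (\<exists>r' q P. Proposal r' q P \<in> inbox s \<and> valid_msg c (Proposal r' q P) \<and> rnd s \<le> r'
            \<and> (s', out) = enter c t v s (Suc r') q)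
        \<comment> \<open>(3) round timeout expires: broadcast timeout(round)\<close>
      \<or> (d \<le> t \<and> \<not> b \<and> s' = s\<lparr>ph := Wt d True\<rparr> \<and> out = bcast c (TimeoutM v (rnd s)))
        \<comment> \<open>(3) 2f+1 timeout messages for some round \<ge> round: jump to the largest such round,
            forward them, (4)\<close>
      \<or> (\<exists>r'' S out0. rnd s \<le> r'' \<and> 2 * F c + 1 \<le> card (tsigners c (inbox s) r'')
            \<and> (\<forall>r'. r'' < r' \<longrightarrow> card (tsigners c (inbox s) r') < 2 * F c + 1)
            \<and> fset S \<subseteq> tsigners c (inbox s) r'' \<and> fcard S = 2 * F c + 1
            \<and> (s', out0) = enter c t v s (Suc r'') (cur s)
            \<and> out = out0 \<union> bcast c (TimeoutCert r'' S)))"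

text \<open>Global state: current time, local states, in-flight messages to honest nodes
  (send time, sender, receiver, message), the signatures known to the adversary, and a log of all
  messages ever sent (send time, sender, receiver, message).\<close>
record gst =
  now    :: real
  ls     :: "nat \<Rightarrow> lst"
  flight :: "(real \<times> nat \<times> nat \<times> msg) set"
  known  :: "sig set"
  sent   :: "(real \<times> nat \<times> nat \<times> msg) set"

text \<open>Honest node v sends \<open>out\<close> at the current time.  Channels are authenticated and private:
  the adversary learns the signatures of exactly the messages sent to byzantine nodes.\<close>
definition emit :: "cfg \<Rightarrow> nat \<Rightarrow> (nat \<times> msg) set \<Rightarrow> gst \<Rightarrow> gst" where
  "emit c v out g = g\<lparr>
      flight := flight g \<union> {(now g, v, j, m) | j m. (j, m) \<in> out \<and> j \<in> Hon c},
      known := known g \<union> \<Union> {sigs m | j m. (j, m) \<in> out \<and> j \<notin> Hon c},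
      sent := sent g \<union> {(now g, v, j, m) | j m. (j, m) \<in> out}\<rparr>"

definition lst0 :: lst where
  "lst0 = \<lparr>rnd = 0, cur = {||}, ph = Wt 0 True, inbox = {}\<rparr>"

definition init :: "cfg \<Rightarrow> gst" where
  "init c = (let E = (\<lambda>v. enter c 0 v lst0 0 {|Genesis|}) in
     \<lparr>now = 0, ls = (\<lambda>v. fst (E v)),
      flight = {(0, v, j, m) | v j m. v \<in> Hon c \<and> (j, m) \<in> snd (E v) \<and> j \<in> Hon c},
      known = \<Union> {sigs m | v j m. v \<in> Hon c \<and> (j, m) \<in> snd (E v) \<and> j \<notin> Hon c},
      sent = {(0, v, j, m) | v j m. v \<in> Hon c \<and> (j, m) \<in> snd (E v)}\<rparr>)"

definition enabled :: "cfg \<Rightarrow> gst \<Rightarrow> nat \<Rightarrow> bool" where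
  "enabled c g v \<longleftrightarrow> (\<exists>s' out. lact c (now g) v (ls g v) s' out)"

inductive step :: "cfg \<Rightarrow> gst \<Rightarrow> gst \<Rightarrow> bool" for c where
  honest: "\<lbrakk> v \<in> Hon c; lact c (now g) v (ls g v) s' out \<rbrakk>
     \<Longrightarrow> step c g (emit c v out (g\<lparr>ls := (ls g)(v := s')\<rparr>))"
| deliver: "\<lbrakk> (t, a, j, m) \<in> flight g \<rbrakk>
     \<Longrightarrow> step c g (g\<lparr>flight := flight g - {(t, a, j, m)},
                      ls := (ls g)(j := (ls g j)\<lparr>inbox := insert m (inbox (ls g j))\<rparr>)\<rparr>)"
  \<comment> \<open>a byzantine node sends a message to an honest node; it cannot forge honest signatures\<close>
| byz: "\<lbrakk> b < N c; b \<notin> Hon c; j \<in> Hon c;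
          \<forall>x \<in> sigs m. signer c x < N c \<and> (signer c x \<in> Hon c \<longrightarrow> x \<in> known g) \<rbrakk>
     \<Longrightarrow> step c g (g\<lparr>flight := insert (now g, b, j, m) (flight g),
                      sent := insert (now g, b, j, m) (sent g)\<rparr>)"
  \<comment> \<open>time passes: local computation takes no time (no honest action is pending), timers are
      reliable, and from GST on, messages between honest nodes are delivered within Delta\<close>
| tick: "\<lbrakk> now g < t';
           \<forall>v \<in> Hon c. \<not> enabled c g v;
           \<forall>v \<in> Hon c. \<forall>d. ph (ls g v) = Cre d \<longrightarrow> t' \<le> d;
           \<forall>v \<in> Hon c. \<forall>d. ph (ls g v) = Wt d False \<longrightarrow> t' \<le> d;
           \<forall>s a j m. (s, a, j, m) \<in> flight g \<and> a \<in> Hon c \<and> j \<in> Hon c \<longrightarrow> t' \<le> max s (GST c) + D c \<rbrakk>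
     \<Longrightarrow> step c g (g\<lparr>now := t'\<rparr>)"

definition execution :: "cfg \<Rightarrow> (nat \<Rightarrow> gst) \<Rightarrow> bool" where
  "execution c \<rho> \<longleftrightarrow> \<rho> 0 = init c \<and> (\<forall>k. step c (\<rho> k) (\<rho> (Suc k)))
      \<and> (\<forall>T. \<exists>k. T \<le> now (\<rho> k))"

definition state_at :: "(nat \<Rightarrow> gst) \<Rightarrow> real \<Rightarrow> gst" where
  "state_at \<rho> t = \<rho> (GREATEST k. now (\<rho> k) \<le> t)"

definition rmax :: "cfg \<Rightarrow> (nat \<Rightarrow> gst) \<Rightarrow> real \<Rightarrow> nat" where
  "rmax c \<rho> t = Max ((\<lambda>v. rnd (ls (state_at \<rho> t) v)) ` Hon c)"

definition round_start :: "cfg \<Rightarrow> (nat \<Rightarrow> gst) \<Rightarrow> nat \<Rightarrow> real" where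
  "round_start c \<rho> i = Inf {t. 0 \<le> t \<and> i \<le> rmax c \<rho> t}"

definition starts_round :: "(nat \<Rightarrow> gst) \<Rightarrow> nat \<Rightarrow> nat \<Rightarrow> real \<Rightarrow> bool" where
  "starts_round \<rho> v i t \<longleftrightarrow> (i = 0 \<and> t = 0) \<or>
     (\<exists>k. now (\<rho> (Suc k)) = t \<and> rnd (ls (\<rho> k) v) \<noteq> i \<and> rnd (ls (\<rho> (Suc k)) v) = i)"

definition unified :: "cfg \<Rightarrow> (nat \<Rightarrow> gst) \<Rightarrow> nat \<Rightarrow> bool" where
  "unified c \<rho> i \<longleftrightarrow> (\<forall>v \<in> Hon c. \<exists>t. starts_round \<rho> v i t
      \<and> round_start c \<rho> i \<le> t \<and> t \<le> round_start c \<rho> i + D c)"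

definition block_or_proposal_of :: "nat \<Rightarrow> msg \<Rightarrow> bool" where
  "block_or_proposal_of i m \<longleftrightarrow>
     (\<exists>p S. m = BlockM (Blk i p S)) \<or> (\<exists>q P. m = Proposal i q P)"

end

theory Submission imports Defs begin

lemma lact_cases:
 assumes "lact c t v s s' out"
 shows "inbox s' = inbox s \<and> (
  (\<exists>d p S. ph s = Cre d \<and> rnd s' = rnd s \<and> ph s' = Wt (t + RT c) False \<and> out = bcast c (BlockM (Blk (rnd s) p S))) \<or>
  (\<exists>d. ph s = Cre d \<and> d \<le> t \<and> rnd s' = rnd s \<and> ph s' = Wt (t + RT c) False \<and> ((\<exists>q P. out = bcast c (Proposal (rnd s) q P)) \<or> (card (fst ` permit_pairs c (inbox s) (rnd s)) < 2*F c+1 \<and> out = {}))) \<or>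
  (\<exists>d. ph s = Cre d \<and> later_evidence c (inbox s) (rnd s) \<and> rnd s' = rnd s \<and> ph s' = Wt (t+RT c) False \<and> out = {}) \<or>
  (\<exists>d b r q X. ph s = Wt d b \<and> rnd s \<le> r \<and> rnd s' = Suc r \<and> ph s' = (if v = Suc r mod N c then Cre (t + CT c) else Wt (t + RT c) False) \<and> out = insert (Suc r mod N c, Permit v (Suc r) q) X \<and>
      ((\<exists>p S. BlockM (Blk r p S) \<in> inbox s \<and> valid_msg c (BlockM (Blk r p S)) \<and> X = {}) \<or> (\<exists>P. Proposal r q P \<in> inbox s \<and> valid_msg c (Proposal r q P) \<and> X = {}) \<or> (2*F c+1 \<le> card (tsigners c (inbox s) r) \<and> (\<exists>S. X = bcast c (TimeoutCert r S))))) \<or>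
  (\<exists>d. ph s = Wt d False \<and> d \<le> t \<and> rnd s' = rnd s \<and> ph s' = Wt d True \<and> out = bcast c (TimeoutM v (rnd s))))"
proof (cases "ph s")
  case (Cre d)
  then show ?thesis using assms unfolding lact_def
    by (auto split: if_splits)
next
  case (Wt d b)
  have H: "(\<exists>bk. BlockM bk \<in> inbox s \<and> valid_msg c (BlockM bk) \<and> rnd s \<le> blk_round bk
            \<and> (case bk of Blk r p S \<Rightarrow> (s', out) = enter c t v s (Suc r) (finsert bk p)
                         | Genesis \<Rightarrow> False))
      \<or> (\<exists>r' q P. Proposal r' q P \<in> inbox s \<and> valid_msg c (Proposal r' q P) \<and> rnd s \<le> r'
            \<and> (s', out) = enter c t v s (Suc r') q)
      \<or> (d \<le> t \<and> \<not> b \<and> s' = s\<lparr>ph := Wt d True\<rparr> \<and> out = bcast c (TimeoutM v (rnd s)))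
      \<or> (\<exists>r'' S out0. rnd s \<le> r'' \<and> 2 * F c + 1 \<le> card (tsigners c (inbox s) r'')
            \<and> (\<forall>r'. r'' < r' \<longrightarrow> card (tsigners c (inbox s) r') < 2 * F c + 1)
            \<and> fset S \<subseteq> tsigners c (inbox s) r'' \<and> fcard S = 2 * F c + 1
            \<and> (s', out0) = enter c t v s (Suc r'') (cur s)
            \<and> out = out0 \<union> bcast c (TimeoutCert r'' S))"
    using assms Wt unfolding lact_def by simp
  show ?thesis using H
  proof (elim disjE exE conjE)
    fix bk assume a: "BlockM bk \<in> inbox s" "valid_msg c (BlockM bk)" "rnd s \<le> blk_round bk"
      "case bk of Genesis \<Rightarrow> False | Blk r p S \<Rightarrow> (s', out) = enter c t v s (Suc r) (finsert bk p)"
    then obtain r p S where bk: "bk = Blk r p S" by (cases bk) auto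
    show ?thesis using a Wt unfolding bk enter_def by auto
  next
    fix r' q P assume "Proposal r' q P \<in> inbox s" "valid_msg c (Proposal r' q P)" "rnd s \<le> r'"
      "(s', out) = enter c t v s (Suc r') q"
    then show ?thesis using Wt unfolding enter_def by auto
  next
    assume "d \<le> t" "\<not> b" "s' = s\<lparr>ph := Wt d True\<rparr>" "out = bcast c (TimeoutM v (rnd s))"
    then show ?thesis using Wt by auto
  next
    fix r'' S out0 assume "rnd s \<le> r''" "2 * F c + 1 \<le> card (tsigners c (inbox s) r'')"
      "(s', out0) = enter c t v s (Suc r'') (cur s)" "out = out0 \<union> bcast c (TimeoutCert r'' S)"
    then show ?thesis using Wt unfolding enter_def by auto
  qed
qed

lemma lact_cases2:
  assumes "lact c t v s s' out"
  obtains (blk) d p S where "ph s = Cre d" "rnd s' = rnd s" "ph s' = Wt (t + RT c) False" "out = bcast c (BlockM (Blk (rnd s) p S))"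
  | (cto) d where "ph s = Cre d" "d \<le> t" "rnd s' = rnd s" "ph s' = Wt (t + RT c) False"
      "(\<exists>q P. out = bcast c (Proposal (rnd s) q P)) \<or> (card (fst ` permit_pairs c (inbox s) (rnd s)) < 2*F c+1 \<and> out = {})"
  | (later) d where "ph s = Cre d" "later_evidence c (inbox s) (rnd s)" "rnd s' = rnd s" "ph s' = Wt (t+RT c) False" "out = {}"
  | (ent) d b r q X where "ph s = Wt d b" "rnd s \<le> r" "rnd s' = Suc r" "ph s' = (if v = Suc r mod N c then Cre (t + CT c) else Wt (t + RT c) False)" "out = insert (Suc r mod N c, Permit v (Suc r) q) X"
      "(\<exists>p S. BlockM (Blk r p S) \<in> inbox s \<and> valid_msg c (BlockM (Blk r p S)) \<and> X = {}) \<or> (\<exists>P. Proposal r q P \<in> inbox s \<and> valid_msg c (Proposal r q P) \<and> X = {}) \<or> (2*F c+1 \<le> card (tsigners c (inbox s) r) \<and> (\<exists>S. X = bcast c (TimeoutCert r S)))"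
  | (wto) d where "ph s = Wt d False" "d \<le> t" "rnd s' = rnd s" "ph s' = Wt d True" "out = bcast c (TimeoutM v (rnd s))"
proof -
  have H: "?thesis" if "(\<exists>d p S. ph s = Cre d \<and> rnd s' = rnd s \<and> ph s' = Wt (t + RT c) False \<and> out = bcast c (BlockM (Blk (rnd s) p S))) \<or>
  (\<exists>d. ph s = Cre d \<and> d \<le> t \<and> rnd s' = rnd s \<and> ph s' = Wt (t + RT c) False \<and> ((\<exists>q P. out = bcast c (Proposal (rnd s) q P)) \<or> (card (fst ` permit_pairs c (inbox s) (rnd s)) < 2*F c+1 \<and> out = {}))) \<or>
  (\<exists>d. ph s = Cre d \<and> later_evidence c (inbox s) (rnd s) \<and> rnd s' = rnd s \<and> ph s' = Wt (t+RT c) False \<and> out = {}) \<or>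
  (\<exists>d b r q X. ph s = Wt d b \<and> rnd s \<le> r \<and> rnd s' = Suc r \<and> ph s' = (if v = Suc r mod N c then Cre (t + CT c) else Wt (t + RT c) False) \<and> out = insert (Suc r mod N c, Permit v (Suc r) q) X \<and>
      ((\<exists>p S. BlockM (Blk r p S) \<in> inbox s \<and> valid_msg c (BlockM (Blk r p S)) \<and> X = {}) \<or> (\<exists>P. Proposal r q P \<in> inbox s \<and> valid_msg c (Proposal r q P) \<and> X = {}) \<or> (2*F c+1 \<le> card (tsigners c (inbox s) r) \<and> (\<exists>S. X = bcast c (TimeoutCert r S))))) \<or>
  (\<exists>d. ph s = Wt d False \<and> d \<le> t \<and> rnd s' = rnd s \<and> ph s' = Wt d True \<and> out = bcast c (TimeoutM v (rnd s)))"
  proof -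
    note th = that
    show ?thesis
      apply (rule disjE[OF th])
       apply (elim exE conjE, rule blk, assumption+)
      apply (erule disjE)
       apply (elim exE conjE, rule cto, assumption+)
      apply (erule disjE)
       apply (elim exE conjE, rule later, assumption+)
      apply (erule disjE)
       apply (elim exE conjE, rule ent, assumption+)
      apply (elim exE conjE, rule wto, assumption+)
      done
  qed
  show ?thesis using lact_cases[OF assms] by (intro H) blast
qed

lemma emit_simps[simp]:
  "now (emit c v out g) = now g" "ls (emit c v out g) = ls g"
  "flight (emit c v out g) = flight g \<union> {(now g, v, j, m) | j m. (j, m) \<in> out \<and> j \<in> Hon c}"
  "known (emit c v out g) = known g \<union> \<Union> {sigs m | j m. (j, m) \<in> out \<and> j \<notin> Hon c}"
  "sent (emit c v out g) = sent g \<union> {(now g, v, j, m) | j m. (j, m) \<in> out}"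
  by (simp_all add: emit_def)

lemma lact_mono: "lact c t v s s' out \<Longrightarrow> rnd s \<le> rnd s' \<and> inbox s' = inbox s"
  using lact_cases[of c t v s s' out] by auto

lemma step_mono:
  assumes "step c g g'"
  shows "now g \<le> now g' \<and> rnd (ls g v) \<le> rnd (ls g' v) \<and> inbox (ls g v) \<subseteq> inbox (ls g' v)"
  using assms
proof cases
  case (honest w s' out)
  then show ?thesis using lact_mono[of c "now g" w "ls g w" s' out] by auto
qed auto

lemma step_local:
  assumes "step c g g'" "rnd (ls g' v) \<noteq> rnd (ls g v) \<or> ph (ls g' v) \<noteq> ph (ls g v)"
  shows "v \<in> Hon c \<and> (\<exists>s' out. lact c (now g) v (ls g v) s' out \<and> ls g' v = s' \<and> now g' = now g
     \<and> g' = emit c v out (g\<lparr>ls := (ls g)(v := s')\<rparr>))"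
  using assms
proof cases
  case (honest w s' out)
  then show ?thesis using assms(2) by (cases "w = v") auto
qed (use assms(2) in auto)

lemma init_ls: "ls (init c) v = lst0\<lparr>rnd := 0, cur := {|Genesis|},
   ph := (if v = 0 then Cre (CT c) else Wt (RT c) False)\<rparr>"
  by (simp add: init_def enter_def Let_def)

lemma init_now: "now (init c) = 0" by (simp add: init_def Let_def)

lemma init_flight: "flight (init c) = {(0, v, 0, Permit v 0 {|Genesis|}) | v. v \<in> Hon c \<and> 0 \<in> Hon c}"
  by (auto simp add: init_def enter_def Let_def)

lemma init_known: "known (init c) = \<Union> {sigs (Permit v 0 {|Genesis|}) | v. v \<in> Hon c \<and> 0 \<notin> Hon c}"
  by (auto simp add: init_def enter_def Let_def)

definition invF :: "cfg \<Rightarrow> gst \<Rightarrow> bool" where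
  "invF c g \<longleftrightarrow> (\<forall>s a j m. (s,a,j,m) \<in> flight g \<and> a \<in> Hon c \<and> j \<in> Hon c \<longrightarrow> now g \<le> max s (GST c) + D c)"

definition invC :: "cfg \<Rightarrow> gst \<Rightarrow> bool" where
  "invC c g \<longleftrightarrow> (\<forall>v\<in>Hon c. \<forall>d. ph (ls g v) = Cre d \<longrightarrow> now g \<le> d \<and> v = rnd (ls g v) mod N c)"

lemma invF_init: "wf_cfg c \<Longrightarrow> invF c (init c)"
  by (auto simp: invF_def init_flight init_now wf_cfg_def)

lemma invF_step: assumes "wf_cfg c" "step c g g'" "invF c g" shows "invF c g'"
  using assms(2)
proof cases
  case (honest v s' out)
  then show ?thesis using assms(1,3) unfolding invF_def wf_cfg_def by auto
next
  case (deliver t a j m)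
  then show ?thesis using assms(3) unfolding invF_def by auto
next
  case (byz b j m)
  then show ?thesis using assms(3) unfolding invF_def by (auto; blast)
next
  case (tick t')
  then show ?thesis using assms(3) unfolding invF_def by auto
qed

lemma invC_init: "wf_cfg c \<Longrightarrow> invC c (init c)"
  by (auto simp: invC_def init_ls init_now wf_cfg_def)

lemma invC_step: assumes "wf_cfg c" "step c g g'" "invC c g" shows "invC c g'"
  using assms(2)
proof cases
  case (honest v s' out)
  have "ph s' = Cre d \<Longrightarrow> now g \<le> d \<and> v = rnd s' mod N c" for d
    using lact_cases[OF honest(3)] assms(1) by (auto simp: wf_cfg_def split: if_splits)
  then show ?thesis using honest assms(3) unfolding invC_def by auto
next
  case (deliver t a j m)
  then show ?thesis using assms(3) unfolding invC_def by auto
next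
  case (byz b j m)
  then show ?thesis using assms(3) unfolding invC_def by auto
next
  case (tick t')
  then show ?thesis using assms(3) unfolding invC_def by auto
qed


locale exe =
  fixes c :: cfg and \<rho> :: "nat \<Rightarrow> gst"
  assumes wf: "wf_cfg c" and ex: "execution c \<rho>"
begin

lemma stepk: "step c (\<rho> k) (\<rho> (Suc k))"
  using ex unfolding execution_def by blast

lemma rho0: "\<rho> 0 = init c"
  using ex unfolding execution_def by blast

lemma diverge: "\<exists>k. T \<le> now (\<rho> k)"
  using ex unfolding execution_def by blast

lemma now_mono: "k \<le> k' \<Longrightarrow> now (\<rho> k) \<le> now (\<rho> k')"
  using lift_Suc_mono_le[of "\<lambda>k. now (\<rho> k)"] step_mono[OF stepk] by blast

lemma rnd_mono: "k \<le> k' \<Longrightarrow> rnd (ls (\<rho> k) v) \<le> rnd (ls (\<rho> k') v)"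
  using lift_Suc_mono_le[of "\<lambda>k. rnd (ls (\<rho> k) v)"] step_mono[OF stepk] by blast

lemma inbox_mono: "k \<le> k' \<Longrightarrow> inbox (ls (\<rho> k) v) \<subseteq> inbox (ls (\<rho> k') v)"
  using lift_Suc_mono_le[of "\<lambda>k. inbox (ls (\<rho> k) v)"] step_mono[OF stepk] by blast

lemma now_nonneg: "0 \<le> now (\<rho> k)"
  using now_mono[of 0 k] rho0 init_now by simp

lemma invF_all: "invF c (\<rho> k)"
  by (induction k) (auto simp: rho0 invF_init[OF wf] intro: invF_step[OF wf stepk])

lemma invC_all: "invC c (\<rho> k)"
  by (induction k) (auto simp: rho0 invC_init[OF wf] intro: invC_step[OF wf stepk])

lemma persist:
  assumes "(s,a,j,m) \<in> flight (\<rho> k0)" "k0 \<le> k"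
  shows "(s,a,j,m) \<in> flight (\<rho> k) \<or> m \<in> inbox (ls (\<rho> k) j)"
  using assms(2)
proof (induction k rule: dec_induct)
  case base then show ?case using assms(1) by simp
next
  case (step k)
  have im: "inbox (ls (\<rho> k) j) \<subseteq> inbox (ls (\<rho> (Suc k)) j)" using inbox_mono[of k "Suc k"] by simp
  show ?case using stepk[of k]
  proof cases
    case (honest v s' out)
    then show ?thesis using step.IH im by auto
  next
    case (deliver t a' j' m')
    then show ?thesis using step.IH im by (cases "(t,a',j',m') = (s,a,j,m)") auto
  next
    case (byz b j' m')
    then show ?thesis using step.IH im by auto
  next
    case (tick t')
    then show ?thesis using step.IH im by auto
  qed
qed

lemma delivered:
  assumes "(s,a,j,m) \<in> flight (\<rho> k0)" "k0 \<le> k" "a \<in> Hon c" "j \<in> Hon c"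
    "max s (GST c) + D c < now (\<rho> k)"
  shows "m \<in> inbox (ls (\<rho> k) j)"
  using persist[OF assms(1,2)] invF_all[of k] assms(3-5) unfolding invF_def by force

end


locale rexe = exe +
  fixes i :: nat
  assumes uni: "unified c \<rho> i" and gst: "GST c \<le> round_start c \<rho> i" and uh: "i mod N c \<in> Hon c"
begin

abbreviation "TT \<equiv> round_start c \<rho> i"
abbreviation "u \<equiv> i mod N c"

lemma Npos: "0 < N c" using wf unfolding wf_cfg_def by simp

lemma Lnow:
  assumes "v \<in> Hon c" "i \<le> rnd (ls (\<rho> k) v)"
  shows "TT \<le> now (\<rho> k)"
proof -
  obtain t where st: "starts_round \<rho> v i t" "TT \<le> t" using uni assms(1) unfolding unified_def by blast
  show ?thesis
  proof (cases "i = 0 \<and> t = 0")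
    case True then show ?thesis using st now_nonneg[of k] by simp
  next
    case False
    then obtain k' where k': "now (\<rho> (Suc k')) = t" "rnd (ls (\<rho> k') v) \<noteq> i" "rnd (ls (\<rho> (Suc k')) v) = i"
      using st(1) unfolding starts_round_def by blast
    have "Suc k' \<le> k"
    proof (rule ccontr)
      assume "\<not> Suc k' \<le> k"
      then have "rnd (ls (\<rho> k) v) \<le> rnd (ls (\<rho> k') v)" using rnd_mono by simp
      moreover have "rnd (ls (\<rho> k') v) \<le> i" using rnd_mono[of k' "Suc k'" v] k'(3) by simp
      ultimately show False using k'(2) assms(2) by simp
    qed
    then show ?thesis using now_mono[of "Suc k'" k] k'(1) st(2) by simp
  qed
qed

lemma Lenter:
  assumes "v \<in> Hon c"
  shows "\<exists>k0 t p. TT \<le> t \<and> t \<le> TT + D c \<and> rnd (ls (\<rho> k0) v) = i \<and> now (\<rho> k0) = t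
     \<and> ph (ls (\<rho> k0) v) = (if v = u then Cre (t + CT c) else Wt (t + RT c) False)
     \<and> (t, v, u, Permit v i p) \<in> flight (\<rho> k0)"
proof -
  obtain t where st: "starts_round \<rho> v i t" "TT \<le> t" "t \<le> TT + D c"
    using uni assms(1) unfolding unified_def by blast
  show ?thesis
  proof (cases "i = 0 \<and> t = 0")
    case True
    then show ?thesis using st assms uh
      by (intro exI[of _ 0] exI[of _ t] exI[of _ "{|Genesis|}"]) (auto simp: rho0 init_ls init_now init_flight)
  next
    case False
    then obtain k' where k': "now (\<rho> (Suc k')) = t" "rnd (ls (\<rho> k') v) \<noteq> i" "rnd (ls (\<rho> (Suc k')) v) = i"
      using st(1) unfolding starts_round_def by blast
    from step_local[OF stepk[of k'], of v] k'
    obtain s' out where L: "lact c (now (\<rho> k')) v (ls (\<rho> k') v) s' out" "ls (\<rho> (Suc k')) v = s'"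
      "now (\<rho> (Suc k')) = now (\<rho> k')" "\<rho> (Suc k') = emit c v out ((\<rho> k')\<lparr>ls := (ls (\<rho> k'))(v := s')\<rparr>)"
      by auto
    from lact_cases[OF L(1)] k' L(2)
    obtain r q X where C: "rnd s' = Suc r" "ph s' = (if v = Suc r mod N c then Cre (now (\<rho> k') + CT c) else Wt (now (\<rho> k') + RT c) False)"
       "out = insert (Suc r mod N c, Permit v (Suc r) q) X"
      by auto
    have ri: "Suc r = i" using C(1) k'(3) L(2) by simp
    have "(t, v, u, Permit v i q) \<in> flight (\<rho> (Suc k'))"
      using L(4) C(3) ri uh k'(1) L(3) by auto
    then show ?thesis using st C L ri k'
      by (intro exI[of _ "Suc k'"] exI[of _ t] exI[of _ q]) auto
  qed
qed

end

definition low :: "nat \<Rightarrow> sig \<Rightarrow> bool" where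
  "low i x = (case x of SPermit j r p \<Rightarrow> r < i | SBlock b \<Rightarrow> blk_round b < i | STimeout j r \<Rightarrow> r < i)"

definition okm :: "cfg \<Rightarrow> nat \<Rightarrow> msg \<Rightarrow> bool" where
  "okm c i m \<longleftrightarrow> (\<forall>x\<in>sigs m. signer c x \<in> Hon c \<longrightarrow> low i x \<or> (\<exists>j p. m = Permit j i p))"

definition outok :: "cfg \<Rightarrow> nat \<Rightarrow> (nat \<times> msg) set \<Rightarrow> bool" where
  "outok c i out \<longleftrightarrow> (\<forall>(j,m)\<in>out. okm c i m \<and> (j \<notin> Hon c \<longrightarrow> (\<forall>x\<in>sigs m. signer c x \<in> Hon c \<longrightarrow> low i x)))"

definition JJ :: "cfg \<Rightarrow> nat \<Rightarrow> real \<Rightarrow> gst \<Rightarrow> bool" where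
  "JJ c i B g \<longleftrightarrow> (\<forall>v\<in>Hon c. rnd (ls g v) \<le> i) \<and> (\<forall>x\<in>known g. signer c x \<in> Hon c \<longrightarrow> low i x)
    \<and> (\<forall>(s,a,j,m)\<in>flight g. okm c i m) \<and> (\<forall>v. \<forall>m\<in>inbox (ls g v). okm c i m)
    \<and> (\<forall>v\<in>Hon c. rnd (ls g v) = i \<longrightarrow> (\<forall>d b. ph (ls g v) = Wt d b \<longrightarrow> B \<le> d \<and> \<not> b))"

lemma count_hon:
  assumes "wf_cfg c" "A \<subseteq> {..<N c}" "2 * F c + 1 \<le> card A"
  shows "\<exists>j\<in>A. j \<in> Hon c"
proof (rule ccontr)
  assume "\<not> ?thesis"
  then have "A \<subseteq> {..<N c} - Hon c" using assms(2) by auto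
  then have "card A \<le> card ({..<N c} - Hon c)" by (intro card_mono) auto
  also have "\<dots> = N c - card (Hon c)" using assms(1) unfolding wf_cfg_def
    by (subst card_Diff_subset) (auto intro: finite_subset)
  also have "\<dots> = F c" using assms(1) unfolding wf_cfg_def by auto
  finally show False using assms(3) by simp
qed

lemma no_high_block:
  assumes "wf_cfg c" "\<forall>m\<in>I. okm c i m" "BlockM (Blk r p S) \<in> I" "valid_msg c (BlockM (Blk r p S))"
  shows "r < i"
proof -
  have "fset S \<subseteq> {..<N c}" "2 * F c + 1 \<le> card (fset S)" using assms(4) by (auto simp: fcard.rep_eq)
  then obtain j where j: "j |\<in>| S" "j \<in> Hon c" using count_hon[OF assms(1)] by blast
  have sg: "SPermit j r p \<in> sigs (BlockM (Blk r p S))" using j by auto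
  have "okm c i (BlockM (Blk r p S))" using assms(2,3) by blast
  then have "low i (SPermit j r p)" using sg j unfolding okm_def by fastforce
  then show ?thesis by (simp add: low_def)
qed

lemma no_high_prop:
  assumes "wf_cfg c" "\<forall>m\<in>I. okm c i m" "Proposal r q P \<in> I" "valid_msg c (Proposal r q P)"
  shows "r < i"
proof -
  have "fset (fst |`| P) \<subseteq> {..<N c}" "2 * F c + 1 \<le> card (fset (fst |`| P))" using assms(4) by (auto simp: fcard.rep_eq)
  then obtain j where j: "j |\<in>| fst |`| P" "j \<in> Hon c" using count_hon[OF assms(1)] by blast
  then obtain p where "(j, p) |\<in>| P" by force
  then have sg: "SPermit j r p \<in> sigs (Proposal r q P)" by auto
  have "okm c i (Proposal r q P)" using assms(2,3) by blast
  then have "low i (SPermit j r p)" using sg j unfolding okm_def by fastforce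
  then show ?thesis by (simp add: low_def)
qed

lemma no_high_to:
  assumes "wf_cfg c" "\<forall>m\<in>I. okm c i m" "2 * F c + 1 \<le> card (tsigners c I r)"
  shows "r < i"
proof -
  have "tsigners c I r \<subseteq> {..<N c}" unfolding tsigners_def by auto
  then obtain j where j: "j \<in> tsigners c I r" "j \<in> Hon c" using count_hon[OF assms(1) _ assms(3)] by blast
  then consider "TimeoutM j r \<in> I" | S where "TimeoutCert r S \<in> I" "j |\<in>| S" unfolding tsigners_def by blast
  then show ?thesis
  proof cases
    case 1
    have "okm c i (TimeoutM j r)" using assms(2) 1 by blast
    then have "low i (STimeout j r)" using j unfolding okm_def by fastforce
    then show ?thesis by (simp add: low_def)
  next
    case 2
    then have sg: "STimeout j r \<in> sigs (TimeoutCert r S)" by auto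
    have "okm c i (TimeoutCert r S)" using assms(2) 2 by blast
    then have "low i (STimeout j r)" using sg j unfolding okm_def by fastforce
    then show ?thesis by (simp add: low_def)
  qed
qed

lemma no_later:
  assumes "wf_cfg c" "\<forall>m\<in>I. okm c i m" "later_evidence c I i"
  shows False
proof -
  from assms(3) consider b where "BlockM b \<in> I" "valid_msg c (BlockM b)" "i < blk_round b"
    | r' q P where "Proposal r' q P \<in> I" "valid_msg c (Proposal r' q P)" "i < r'"
    | r' where "i < r'" "2 * F c + 1 \<le> card (tsigners c I r')"
    unfolding later_evidence_def by blast
  then show False
  proof cases
    case 1
    then obtain r p S where "b = Blk r p S" by (cases b) auto
    then show False using no_high_block[OF assms(1,2)] 1 by fastforce
  next
    case 2 then show False using no_high_prop[OF assms(1,2)] by fastforce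
  next
    case 3 then show False using no_high_to[OF assms(1,2)] by fastforce
  qed
qed


lemma JJ_frame:
  assumes J: "JJ c i B g"
    and r: "\<And>w. rnd (ls g' w) = rnd (ls g w)" and p: "\<And>w. ph (ls g' w) = ph (ls g w)"
    and k: "\<And>x. x \<in> known g' \<Longrightarrow> signer c x \<in> Hon c \<Longrightarrow> x \<in> known g \<or> low i x"
    and f: "\<And>s a j m. (s,a,j,m) \<in> flight g' \<Longrightarrow> (s,a,j,m) \<in> flight g \<or> okm c i m"
    and ib: "\<And>w m. m \<in> inbox (ls g' w) \<Longrightarrow> m \<in> inbox (ls g w) \<or> okm c i m"
  shows "JJ c i B g'"
proof -
  have J1: "\<forall>v\<in>Hon c. rnd (ls g v) \<le> i" and J2: "\<forall>x\<in>known g. signer c x \<in> Hon c \<longrightarrow> low i x"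
    and J3: "\<forall>(s,a,j,m)\<in>flight g. okm c i m" and J4: "\<forall>v. \<forall>m\<in>inbox (ls g v). okm c i m"
    and J5: "\<forall>v\<in>Hon c. rnd (ls g v) = i \<longrightarrow> (\<forall>d b. ph (ls g v) = Wt d b \<longrightarrow> B \<le> d \<and> \<not> b)"
    using J unfolding JJ_def by blast+
  show ?thesis unfolding JJ_def
  proof (intro conjI)
    show "\<forall>v\<in>Hon c. rnd (ls g' v) \<le> i" using J1 r by simp
    show "\<forall>x\<in>known g'. signer c x \<in> Hon c \<longrightarrow> low i x" using J2 k by blast
    show "\<forall>(s,a,j,m)\<in>flight g'. okm c i m" using J3 f by fast
    show "\<forall>v. \<forall>m\<in>inbox (ls g' v). okm c i m" using J4 ib by blast
    show "\<forall>v\<in>Hon c. rnd (ls g' v) = i \<longrightarrow> (\<forall>d b. ph (ls g' v) = Wt d b \<longrightarrow> B \<le> d \<and> \<not> b)"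
      using J5 r p by metis
  qed
qed

locale rno = rexe +
  assumes nope: "\<forall>k t j m. (t, u, j, m) \<in> sent (\<rho> k) \<longrightarrow> \<not> block_or_proposal_of i m"
begin

abbreviation "BB \<equiv> TT + RT c"

lemma outok_lowall: "(\<forall>(j,m)\<in>out. \<forall>x\<in>sigs m. low i x) \<Longrightarrow> outok c i out"
  unfolding outok_def okm_def by blast

lemma bcast_low: "(\<forall>x\<in>sigs m. low i x) \<Longrightarrow> outok c i (bcast c m)"
  by (rule outok_lowall) (auto simp: bcast_def)

lemma u_sends:
  assumes "\<rho> (Suc k) = emit c u out g" "(0, m) \<in> out" "block_or_proposal_of i m"
  shows False
proof -
  have "(now g, u, 0, m) \<in> sent (\<rho> (Suc k))" using assms(1,2) by auto
  then show False using nope assms(3) by blast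
qed

lemma honest_ok:
  assumes J: "JJ c i BB (\<rho> k)" and nowB: "now (\<rho> (Suc k)) < BB" and vh: "v \<in> Hon c"
    and L: "lact c (now (\<rho> k)) v (ls (\<rho> k) v) s' out"
    and eq: "\<rho> (Suc k) = emit c v out ((\<rho> k)\<lparr>ls := (ls (\<rho> k))(v := s')\<rparr>)"
  shows "rnd s' \<le> i \<and> outok c i out \<and> (rnd s' = i \<longrightarrow> (\<forall>d b. ph s' = Wt d b \<longrightarrow> BB \<le> d \<and> \<not> b))"
proof -
  let ?s = "ls (\<rho> k) v" and ?t = "now (\<rho> k)"
  have r_le: "rnd ?s \<le> i" using J vh unfolding JJ_def by blast
  have ib: "\<forall>m\<in>inbox ?s. okm c i m" using J unfolding JJ_def by blast
  have nows: "now (\<rho> (Suc k)) = ?t" using eq by simp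
  have cre_u: "v = u" if "ph ?s = Cre d" "rnd ?s = i" for d
    using invC_all[of k] vh that unfolding invC_def by auto
  have inb: "(0, m) \<in> bcast c m" for m using Npos by (auto simp: bcast_def)
  have wt_ok: "BB \<le> ?t + RT c" if "rnd ?s = i"
    using Lnow[OF vh, of k] that by simp
  from L show ?thesis
  proof (cases rule: lact_cases2)
    case (blk d p S)
    note a = blk
    have "rnd ?s \<noteq> i"
    proof
      assume ri: "rnd ?s = i"
      then have "v = u" using cre_u a(1) by blast
      then show False using u_sends[of k out] eq a(4) ri inb unfolding block_or_proposal_of_def by blast
    qed
    then have lt: "rnd ?s < i" using r_le by simp
    have "outok c i out" unfolding a(4) by (rule bcast_low) (use lt in \<open>auto simp: low_def\<close>)
    then show ?thesis using a lt by simp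
  next
    case (cto d)
    note a = cto(1-4) and o = cto(5)
    have "outok c i out"
    proof (cases "out = {}")
      case True then show ?thesis by (simp add: outok_def)
    next
      case False
      then obtain q P where o2: "out = bcast c (Proposal (rnd ?s) q P)" using o by blast
      have "rnd ?s \<noteq> i"
      proof
        assume ri: "rnd ?s = i"
        then have "v = u" using cre_u a(1) by blast
        then show False using u_sends[of k out] eq o2 ri inb unfolding block_or_proposal_of_def by blast
      qed
      then have lt: "rnd ?s < i" using r_le by simp
      show ?thesis unfolding o2 by (rule bcast_low) (use lt in \<open>auto simp: low_def\<close>)
    qed
    then show ?thesis using a r_le wt_ok by auto
  next
    case (later d)
    note a = later
    then show ?thesis using r_le wt_ok by (auto simp: outok_def)
  next
    case (ent d b r q X)
    note a = ent(1-5) and ev = ent(6)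
    have ri: "r < i" using ev no_high_block[OF wf ib] no_high_prop[OF wf ib] no_high_to[OF wf ib] by blast
    have xo: "outok c i X"
    proof (cases "X = {}")
      case True then show ?thesis by (simp add: outok_def)
    next
      case False
      then obtain S where "X = bcast c (TimeoutCert r S)" using ev by blast
      then show ?thesis by (simp only:) (rule bcast_low, use ri in \<open>auto simp: low_def\<close>)
    qed
    have po: "outok c i {(Suc r mod N c, Permit v (Suc r) q)}"
    proof (cases "Suc r = i")
      case True then show ?thesis using uh by (auto simp: outok_def okm_def)
    next
      case False then show ?thesis using ri by (auto simp: outok_def okm_def low_def)
    qed
    have "outok c i out" using xo po unfolding a(5) outok_def by blast
    moreover have "rnd s' = i \<longrightarrow> (\<forall>d b. ph s' = Wt d b \<longrightarrow> BB \<le> d \<and> \<not> b)"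
    proof (intro impI allI)
      fix d' b' assume r1: "rnd s' = i" and w: "ph s' = Wt d' b'"
      have "rnd (ls (\<rho> (Suc k)) v) = i" using eq r1 by simp
      then have "TT \<le> now (\<rho> (Suc k))" using Lnow[OF vh] by simp
      then show "BB \<le> d' \<and> \<not> b'" using w a(4) nows by (auto split: if_splits)
    qed
    ultimately show ?thesis using a(3) ri by (metis Suc_leI)
  next
    case (wto d)
    note a = wto
    have "rnd ?s \<noteq> i"
    proof
      assume "rnd ?s = i"
      then have "BB \<le> d" using J vh a(1) unfolding JJ_def by blast
      then show False using a(2) nowB nows by simp
    qed
    then have lt: "rnd ?s < i" using r_le by simp
    have "outok c i out" unfolding a(5) by (rule bcast_low) (use lt in \<open>auto simp: low_def\<close>)
    then show ?thesis using a lt by simp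
  qed
qed


lemma J_step:
  assumes J: "JJ c i BB (\<rho> k)" and nowB: "now (\<rho> (Suc k)) < BB"
  shows "JJ c i BB (\<rho> (Suc k))"
  using stepk[of k]
proof cases
  case (honest v s' out)
  note H = honest_ok[OF J nowB honest(2) honest(3) honest(1)]
  have ib: "inbox s' = inbox (ls (\<rho> k) v)" using lact_mono[OF honest(3)] by simp
  have J1: "\<forall>w\<in>Hon c. rnd (ls (\<rho> (Suc k)) w) \<le> i" using J H honest(1) unfolding JJ_def by auto
  have J2: "\<forall>x\<in>known (\<rho> (Suc k)). signer c x \<in> Hon c \<longrightarrow> low i x"
  proof
    fix x assume "x \<in> known (\<rho> (Suc k))"
    then have "x \<in> known (\<rho> k) \<or> (\<exists>j m. (j, m) \<in> out \<and> j \<notin> Hon c \<and> x \<in> sigs m)"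
      using honest(1) by auto
    then show "signer c x \<in> Hon c \<longrightarrow> low i x"
      using J H unfolding JJ_def outok_def by fast
  qed
  have J3: "\<forall>(s,a,j,m)\<in>flight (\<rho> (Suc k)). okm c i m"
  proof (intro ballI, clarify)
    fix s a j m assume "(s,a,j,m) \<in> flight (\<rho> (Suc k))"
    then have "(s,a,j,m) \<in> flight (\<rho> k) \<or> (j, m) \<in> out" using honest(1) by auto
    then show "okm c i m" using J H unfolding JJ_def outok_def by fast
  qed
  have J4: "\<forall>w. \<forall>m\<in>inbox (ls (\<rho> (Suc k)) w). okm c i m" using J ib honest(1) unfolding JJ_def by auto
  have J5: "\<forall>w\<in>Hon c. rnd (ls (\<rho> (Suc k)) w) = i \<longrightarrow> (\<forall>d b. ph (ls (\<rho> (Suc k)) w) = Wt d b \<longrightarrow> BB \<le> d \<and> \<not> b)"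
  proof (intro ballI impI allI)
    fix w d b assume w: "w \<in> Hon c" "rnd (ls (\<rho> (Suc k)) w) = i" "ph (ls (\<rho> (Suc k)) w) = Wt d b"
    show "BB \<le> d \<and> \<not> b"
    proof (cases "w = v")
      case True then show ?thesis using H w honest(1) by simp
    next
      case False
      then have "ls (\<rho> (Suc k)) w = ls (\<rho> k) w" using honest(1) by simp
      then show ?thesis using J w unfolding JJ_def by metis
    qed
  qed
  show ?thesis unfolding JJ_def using J1 J2 J3 J4 J5 by blast
next
  case (deliver t a j m)
  have "okm c i m" using J deliver(2) unfolding JJ_def by fast
  then show ?thesis using deliver(1) by (intro JJ_frame[OF J]) (auto split: if_splits)
next
  case (byz b j m)
  have "okm c i m" using J byz(5) unfolding JJ_def okm_def by blast
  then show ?thesis using byz(1) by (intro JJ_frame[OF J]) auto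
next
  case (tick t')
  then show ?thesis by (intro JJ_frame[OF J]) auto
qed

lemma J_init: "JJ c i BB (\<rho> 0)"
proof -
  have T0: "i = 0 \<Longrightarrow> TT \<le> 0"
    using Lnow[OF uh, of 0] by (simp add: rho0 init_ls init_now)
  have u0: "i = 0 \<Longrightarrow> 0 \<in> Hon c" using uh by simp
  show ?thesis unfolding JJ_def rho0 using T0 u0
    by (cases "i = 0"; auto simp: init_ls init_known init_flight okm_def low_def lst0_def)
qed

lemma J_all: "now (\<rho> k) < BB \<Longrightarrow> JJ c i BB (\<rho> k)"
proof (induction k)
  case 0 then show ?case using J_init by simp
next
  case (Suc k)
  have "now (\<rho> k) < BB" using now_mono[of k "Suc k"] Suc.prems by simp
  then show ?case using Suc J_step by blast
qed


lemma find_switch: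
  assumes "P a" "\<not> P b" "a \<le> b"
  shows "\<exists>k. a \<le> k \<and> P k \<and> \<not> P (Suc k)"
  using assms(3,2)
proof (induction b rule: dec_induct)
  case base then show ?case using assms(1) by simp
next
  case (step b)
  show ?case
  proof (cases "P b")
    case True then show ?thesis using step by blast
  next
    case False then show ?thesis using step.IH by (meson le_SucI)
  qed
qed

lemma contra: False
proof -
  obtain k0 t p where E: "TT \<le> t" "t \<le> TT + D c" "rnd (ls (\<rho> k0) u) = i" "now (\<rho> k0) = t"
    "ph (ls (\<rho> k0) u) = Cre (t + CT c)"
    using Lenter[OF uh] by auto
  define d where "d = t + CT c"
  have W: "3 * F c < N c" "Hon c \<subseteq> {..<N c}" "card (Hon c) = N c - F c" "0 < D c" "2 * D c < CT c" "CT c < 3 * D c" "5 * D c < RT c"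
    using wf unfolding wf_cfg_def by auto
  have dB: "d < BB" using E W unfolding d_def by simp
  obtain k2 where k2: "d + 1 \<le> now (\<rho> k2)" using diverge by blast
  define P where "P k \<longleftrightarrow> rnd (ls (\<rho> k) u) = i \<and> ph (ls (\<rho> k) u) = Cre d" for k
  have Pk0: "P k0" using E unfolding P_def d_def by simp
  have cre_now: "P k \<Longrightarrow> now (\<rho> k) \<le> d" for k using invC_all[of k] uh unfolding invC_def P_def by auto
  have nP2: "\<not> P k2" using cre_now[of k2] k2 by auto
  have "k0 \<le> k2"
  proof (rule ccontr)
    assume "\<not> k0 \<le> k2"
    then have "now (\<rho> k2) \<le> now (\<rho> k0)" using now_mono by simp
    then show False using k2 E unfolding d_def using W by simp
  qed
  then obtain k where k: "k0 \<le> k" "P k" "\<not> P (Suc k)" using find_switch[of P k0 k2] Pk0 nP2 by blast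
  have nk: "now (\<rho> k) \<le> d" using cre_now k(2) by simp
  have J: "JJ c i BB (\<rho> k)" using J_all nk dB by simp
  have ch: "rnd (ls (\<rho> (Suc k)) u) \<noteq> rnd (ls (\<rho> k) u) \<or> ph (ls (\<rho> (Suc k)) u) \<noteq> ph (ls (\<rho> k) u)"
    using k(2,3) unfolding P_def by auto
  from step_local[OF stepk[of k] ch]
  obtain s' out where L: "lact c (now (\<rho> k)) u (ls (\<rho> k) u) s' out"
      "\<rho> (Suc k) = emit c u out ((\<rho> k)\<lparr>ls := (ls (\<rho> k))(u := s')\<rparr>)"
    by blast
  have ri: "rnd (ls (\<rho> k) u) = i" and pc: "ph (ls (\<rho> k) u) = Cre d" using k(2) unfolding P_def by auto
  have inb: "(0, m) \<in> bcast c m" for m using Npos by (auto simp: bcast_def)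
  have ibok: "\<forall>m\<in>inbox (ls (\<rho> k) u). okm c i m" using J unfolding JJ_def by blast
  from L(1) show False
  proof (cases rule: lact_cases2)
    case (blk d' p S)
    then show False using u_sends[OF L(2)] inb ri unfolding block_or_proposal_of_def by blast
  next
    case (cto d')
    have dd: "d' = d" using cto(1) pc by simp
    have nowge: "d \<le> now (\<rho> k)" using cto(2) dd by simp
    show False
    proof (cases "\<exists>q P. out = bcast c (Proposal (rnd (ls (\<rho> k) u)) q P)")
      case True
      then show False using u_sends[OF L(2)] inb ri unfolding block_or_proposal_of_def by blast
    next
      case False
      then have few: "card (fst ` permit_pairs c (inbox (ls (\<rho> k) u)) i) < 2 * F c + 1"
        using cto(5) ri by auto
      have sub: "Hon c \<subseteq> fst ` permit_pairs c (inbox (ls (\<rho> k) u)) i"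
      proof
        fix v assume vh: "v \<in> Hon c"
        obtain kv tv pv where Ev: "TT \<le> tv" "tv \<le> TT + D c" "now (\<rho> kv) = tv"
          "(tv, v, u, Permit v i pv) \<in> flight (\<rho> kv)"
          using Lenter[OF vh] by blast
        have "kv \<le> k"
        proof (rule ccontr)
          assume "\<not> kv \<le> k"
          then have "now (\<rho> k) \<le> now (\<rho> kv)" using now_mono by simp
          then show False using Ev E nowge W unfolding d_def by simp
        qed
        moreover have "max tv (GST c) + D c < now (\<rho> k)"
          using Ev E nowge W gst unfolding d_def by (simp add: max_def)
        ultimately have "Permit v i pv \<in> inbox (ls (\<rho> k) u)"
          using delivered[OF Ev(4)] vh uh by blast
        moreover have "v < N c" using vh W by auto
        ultimately have "(v, pv) \<in> permit_pairs c (inbox (ls (\<rho> k) u)) i"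
          unfolding permit_pairs_def by simp
        then show "v \<in> fst ` permit_pairs c (inbox (ls (\<rho> k) u)) i" by force
      qed
      have fin: "finite (fst ` permit_pairs c (inbox (ls (\<rho> k) u)) i)"
        by (rule finite_subset[of _ "{..<N c}"]) (auto simp: permit_pairs_def)
      have "card (Hon c) \<le> card (fst ` permit_pairs c (inbox (ls (\<rho> k) u)) i)"
        using card_mono[OF fin sub] .
      then show False using few W by simp
    qed
  next
    case (later d')
    then show False using no_later[OF wf ibok] ri by simp
  next
    case (ent d' b r q X)
    then show False using pc by simp
  next
    case (wto d')
    then show False using pc by simp
  qed
qed

end

theorem lemma10:
  assumes "wf_cfg c"
      and "execution c \<rho>"
      and "GST c \<le> round_start c \<rho> i"
      and "unified c \<rho> i"
      and "i mod N c \<in> Hon c"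
  shows "\<exists>k t j m. (t, i mod N c, j, m) \<in> sent (\<rho> k) \<and> block_or_proposal_of i m"
proof (rule ccontr)
  assume "\<not> ?thesis"
  then have n: "\<forall>k t j m. (t, i mod N c, j, m) \<in> sent (\<rho> k) \<longrightarrow> \<not> block_or_proposal_of i m" by blast
  interpret rno c \<rho> i
    by unfold_locales (use assms n in auto)
  show False by (rule contra)
qed

end
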